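(* Let $k\geq 1$, $t\geq k$ and $\frac{1}{2}\leq p\leq 1$ be real numbers. Then for every real $x$ with $0\leq x\leq \frac{1}{2}$, $$(1+t)^x\geq p^x+\frac{(1+k)^x-p^x}{k^x}\,t^x .$$ *)

theory Defs
  imports Complex_Main
begin

end

theory Submission
  imports Defs
begin

lemma key:
  fixes s p x :: real
  assumes "s \<ge> 1" "1/2 \<le> p" "0 \<le> x" "x \<le> 1/2"
  shows "(1+s) powr (x-1) \<le> p powr x"
proof -
  have "(1+s) powr (x-1) \<le> 2 powr (x-1)"
    using assms by (intro powr_mono2') auto
  also have "\<dots> \<le> 2 powr (-x)" using assms by (intro powr_mono) auto
  also have "\<dots> = (1/2) powr x" by (simp add: powr_minus_divide powr_divide)
  also have "\<dots> \<le> p powr x" using assms by (intro powr_mono2) auto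
  finally show ?thesis .
qed

theorem lemma1:
  fixes k t p x :: real
  assumes "k \<ge> 1" and "t \<ge> k" and "1/2 \<le> p" and "p \<le> 1"
    and "0 \<le> x" and "x \<le> 1/2"
  shows "(1 + t) powr x \<ge> p powr x + ((1 + k) powr x - p powr x) / (k powr x) * t powr x"
proof -
  define g where "g s = ((1+s) powr x - p powr x) * s powr (-x)" for s :: real
  have "g k \<le> g t"
  proof (rule DERIV_nonneg_imp_nondecreasing[OF assms(2)])
    fix s assume s: "k \<le> s" "s \<le> t"
    hence s1: "s \<ge> 1" using assms by auto
    have D: "(g has_real_derivative
       (x * (1+s) powr (x-1)) * s powr (-x) + ((1+s) powr x - p powr x) * (-x * s powr (-x-1))) (at s)"
      unfolding g_def using s1
      by (auto intro!: derivative_eq_intros)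
    have eq: "(x * (1+s) powr (x-1)) * s powr (-x) + ((1+s) powr x - p powr x) * (-x * s powr (-x-1))
       = x * s powr (-x-1) * (p powr x - (1+s) powr (x-1))"
    proof -
      have a: "s powr (-x) = s * s powr (-x-1)"
      proof -
        have "s powr (-x) = s powr (1 + (-x-1))" by simp
        also have "\<dots> = s powr 1 * s powr (-x-1)" by (rule powr_add)
        finally show ?thesis using s1 by simp
      qed
      have b: "(1+s) powr x = (1+s) * (1+s) powr (x-1)"
      proof -
        have "(1+s) powr x = (1+s) powr (1 + (x-1))" by simp
        also have "\<dots> = (1+s) powr 1 * (1+s) powr (x-1)" by (rule powr_add)
        finally show ?thesis using s1 by simp
      qed
      show ?thesis unfolding a b by (simp add: algebra_simps)
    qed
    have "0 \<le> x * s powr (-x-1) * (p powr x - (1+s) powr (x-1))"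
      using key[OF s1 assms(3,5,6)] assms by auto
    thus "\<exists>y. (g has_real_derivative y) (at s) \<and> 0 \<le> y"
      using D eq by metis
  qed
  hence le: "((1 + k) powr x - p powr x) / k powr x \<le> ((1+t) powr x - p powr x) / t powr x"
    unfolding g_def by (simp add: powr_minus divide_inverse)
  have T: "t powr x > 0" using assms by simp
  have "((1 + k) powr x - p powr x) / (k powr x) * t powr x \<le> ((1+t) powr x - p powr x) / t powr x * t powr x"
    using mult_right_mono[OF le less_imp_le[OF T]] .
  also have "\<dots> = (1+t) powr x - p powr x" using T by simp
  finally have "((1 + k) powr x - p powr x) / (k powr x) * t powr x \<le> (1+t) powr x - p powr x" .
  thus ?thesis by simp
qed

end
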